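(* Let $\varepsilon\in(0,1/2)$ and consider two arms with independent priors: $\mu_1=\tfrac12+\varepsilon$ or $\mu_1=\tfrac12-\varepsilon$ each with probability $1/2$, and $\mu_2=\tfrac12-\tfrac{\varepsilon^2}{10}$ almost surely. Then (i) there is a BIC algorithm which almost surely chooses both arms within $O(1)$ rounds (an absolute constant number of rounds); and (ii) there is an absolute constant $c>0$ such that if some BIC algorithm almost surely uses Thompson sampling at round $t$, i.e. $\Pr[A_t=i\mid\mathcal F_t]=\Pr[A^*=i\mid\mathcal F_t]$ almost surely for $i=1,2$, then $t\geq c/\varepsilon$.
   Context: Incentivized exploration model with Bernoulli rewards: given the means, each arm $i$ has an i.i.d. $\{0,1\}$ sample sequence with mean $\mu_i$, the $n$-th choice of arm $i$ revealing its $n$-th sample. Each round the algorithm recommends $A_t$, the agent chooses $A'_t$, and the reward is observed by the algorithm only. With $\mathcal E_{t-1}=\{A'_s=A_s\ \forall s<t\}$, the algorithm is BIC if $\mathbb E[\mu_i-\mu_j\mid A_t=i,\mathcal E_{t-1}]\geq0$ for all rounds $t$ and arms $i,j$ with $\Pr[A_t=i]>0$. $\mathcal F_t$ is the $\sigma$-algebra generated by chosen arms and rewards before round $t$; $A^*=\min(\arg\max_j\mu_j)$. *)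

theory Defs
  imports "HOL-Probability.Probability"
begin

type_synonym hist = "(nat \<times> bool) list"   \<comment> \<open>chosen arms and observed rewards, in order\<close>
type_synonym alg = "hist \<Rightarrow> nat pmf"

definition prior :: "bool pmf" where
  "prior = bernoulli_pmf (1/2)"

definition mu :: "real \<Rightarrow> bool \<Rightarrow> nat \<Rightarrow> real" where
  "mu eps theta i = (if i = 1 then (if theta then 1/2 + eps else 1/2 - eps)
                     else 1/2 - eps^2/10)"

definition best_arm :: "real \<Rightarrow> bool \<Rightarrow> nat" where
  "best_arm eps theta =
     (LEAST i. i \<in> {1,2} \<and> (\<forall>j\<in>{1::nat,2}. mu eps theta j \<le> mu eps theta i))"

definition valid_alg :: "alg \<Rightarrow> bool" where
  "valid_alg A \<longleftrightarrow> (\<forall>h. set_pmf (A h) \<subseteq> {1,2})"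

text \<open>Joint law of (theta, history) after n rounds, all agents complying.
  Each pull of arm a draws a fresh Bernoulli(mu_a) sample (equivalent in law to
  revealing the next i.i.d. sample of that arm).\<close>
fun run :: "real \<Rightarrow> alg \<Rightarrow> nat \<Rightarrow> (bool \<times> hist) pmf" where
  "run eps A 0 = map_pmf (\<lambda>theta. (theta, [])) prior"
| "run eps A (Suc n) =
     bind_pmf (run eps A n) (\<lambda>(theta, h).
       bind_pmf (A h) (\<lambda>a.
         map_pmf (\<lambda>r. (theta, h @ [(a, r)])) (bernoulli_pmf (mu eps theta a))))"

text \<open>Joint law of (theta, history before round t, A_t) for rounds t \<ge> 1.\<close>
definition rec_dist :: "real \<Rightarrow> alg \<Rightarrow> nat \<Rightarrow> (bool \<times> hist \<times> nat) pmf" where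
  "rec_dist eps A t =
     bind_pmf (run eps A (t - 1)) (\<lambda>(theta, h). map_pmf (\<lambda>a. (theta, h, a)) (A h))"

definition BIC :: "real \<Rightarrow> alg \<Rightarrow> bool" where
  "BIC eps A \<longleftrightarrow>
     (\<forall>t\<ge>1. \<forall>i\<in>{1::nat,2}. \<forall>j\<in>{1::nat,2}.
        measure_pmf.prob (rec_dist eps A t) {x. snd (snd x) = i} > 0 \<longrightarrow>
        measure_pmf.expectation (cond_pmf (rec_dist eps A t) {x. snd (snd x) = i})
          (\<lambda>x. mu eps (fst x) i - mu eps (fst x) j) \<ge> 0)"

definition thompson_at :: "real \<Rightarrow> alg \<Rightarrow> nat \<Rightarrow> bool" where
  "thompson_at eps A t \<longleftrightarrow>
     (\<forall>x\<in>set_pmf (run eps A (t - 1)). \<forall>i\<in>{1::nat,2}.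
        pmf (A (snd x)) i =
        measure_pmf.prob (cond_pmf (run eps A (t - 1)) {y. snd y = snd x})
          {y. best_arm eps (fst y) = i})"

end

theory Submission
  imports Defs
begin

definition Hs :: "nat \<Rightarrow> hist set" where
  "Hs n = {h. set h \<subseteq> {1,2} \<times> UNIV \<and> length h = n}"

lemma finite_Hs: "finite (Hs n)"
  unfolding Hs_def by (rule finite_lists_length_eq) auto

lemma Hs_0: "Hs 0 = {[]}" by (auto simp: Hs_def)

lemma Hs_Suc: "Hs (Suc n) = (\<lambda>(h,a,r). h @ [(a,r)]) ` (Hs n \<times> {1,2} \<times> UNIV)"
proof
  show "Hs (Suc n) \<subseteq> (\<lambda>(h,a,r). h @ [(a,r)]) ` (Hs n \<times> {1,2} \<times> UNIV)"
  proof
    fix h assume h: "h \<in> Hs (Suc n)"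
    then have ne: "h \<noteq> []" by (auto simp: Hs_def)
    then have eq: "h = butlast h @ [last h]" by simp
    have "last h \<in> set h" using ne by simp
    then have lh: "last h \<in> {1,2} \<times> UNIV" using h by (auto simp: Hs_def)
    obtain a r where ar: "last h = (a, r)" by (cases "last h")
    have bl: "butlast h \<in> Hs n" using h by (auto simp: Hs_def dest: in_set_butlastD)
    have "h = (\<lambda>(h,a,r). h @ [(a,r)]) (butlast h, a, r)" using eq ar by simp
    moreover have "(butlast h, a, r) \<in> Hs n \<times> {1,2} \<times> UNIV" using bl lh ar by simp
    ultimately show "h \<in> (\<lambda>(h,a,r). h @ [(a,r)]) ` (Hs n \<times> {1,2} \<times> UNIV)"
      by (rule image_eqI)
  qed
qed (auto simp: Hs_def)

lemma inj_snoc: "inj (\<lambda>(h::hist,a::nat,r::bool). h @ [(a,r)])"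
  by (auto simp: inj_def)

lemma mu_bounds:
  assumes "0 < eps" "eps < 1/2"
  shows "0 < mu eps th a" "mu eps th a < 1"
proof -
  have e1: "eps * eps \<le> eps * (1/2)" using assms by (intro mult_left_mono) auto
  have e2: "eps^2 = eps * eps" by (simp add: power2_eq_square)
  have e3: "eps^2 \<ge> 0" by simp
  have m1: "0 < 1/2 - eps^2/10" "1/2 - eps^2/10 < 1" using e1 e2 e3 assms by linarith+
  show "0 < mu eps th a" "mu eps th a < 1" using assms m1
    by (auto simp: mu_def) 
qed

lemma supp_run:
  assumes "valid_alg A"
  shows "set_pmf (run eps A n) \<subseteq> UNIV \<times> Hs n"
proof (induction n)
  case 0 then show ?case by (auto simp: Hs_def)
next
  case (Suc n)
  show ?case
  proof
    fix x assume "x \<in> set_pmf (run eps A (Suc n))"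
    then obtain th h a r where x: "x = (th, h @ [(a,r)])" and th: "(th,h) \<in> set_pmf (run eps A n)"
      and a: "a \<in> set_pmf (A h)" by auto
    have "a \<in> {1,2}" using a assms by (auto simp: valid_alg_def)
    moreover have "h \<in> Hs n" using th Suc by auto
    ultimately have "(h, a, r) \<in> Hs n \<times> {1,2} \<times> UNIV" by simp
    then have "h @ [(a,r)] \<in> Hs (Suc n)" unfolding Hs_Suc
      by (rule rev_image_eqI) simp
    then show "x \<in> UNIV \<times> Hs (Suc n)" unfolding x by simp
  qed
qed

lemma finite_run: "valid_alg A \<Longrightarrow> finite (set_pmf (run eps A n))"
  by (rule finite_subset[OF supp_run]) (auto simp: finite_Hs)

lemma finite_alg: "valid_alg A \<Longrightarrow> finite (set_pmf (A h))"
  by (rule finite_subset[of _ "{1,2}"]) (auto simp: valid_alg_def)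

lemma integral_bind_pmf_fin:
  fixes f :: "'b \<Rightarrow> real"
  assumes M: "finite (set_pmf M)" and N: "\<And>x. x \<in> set_pmf M \<Longrightarrow> finite (set_pmf (N x))"
  shows "measure_pmf.expectation (bind_pmf M N) f =
         measure_pmf.expectation M (\<lambda>x. measure_pmf.expectation (N x) f)"
proof -
  define S where "S = (\<Union>x\<in>set_pmf M. set_pmf (N x))"
  have S: "finite S" unfolding S_def by (intro finite_UN_I M N)
  have "measure_pmf.expectation (bind_pmf M N) f = (\<Sum>z\<in>S. f z * pmf (bind_pmf M N) z)"
    by (rule integral_measure_pmf_real[OF S]) (auto simp: S_def)
  also have "\<dots> = (\<Sum>z\<in>S. f z * (\<Sum>x\<in>set_pmf M. pmf (N x) z * pmf M x))"
    by (intro sum.cong refl arg_cong2[where f="(*)"])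
       (auto simp: pmf_bind intro!: integral_measure_pmf_real M)
  also have "\<dots> = (\<Sum>z\<in>S. \<Sum>x\<in>set_pmf M. f z * (pmf (N x) z * pmf M x))"
    by (simp add: sum_distrib_left)
  also have "\<dots> = (\<Sum>x\<in>set_pmf M. \<Sum>z\<in>S. f z * (pmf (N x) z * pmf M x))"
    by (rule sum.swap)
  also have "\<dots> = (\<Sum>x\<in>set_pmf M. (\<Sum>z\<in>S. f z * pmf (N x) z) * pmf M x)"
    by (simp add: sum_distrib_right mult.assoc)
  also have "\<dots> = (\<Sum>x\<in>set_pmf M. measure_pmf.expectation (N x) f * pmf M x)"
  proof (intro sum.cong refl arg_cong2[where f="(*)"])
    fix x assume x: "x \<in> set_pmf M"
    show "(\<Sum>z\<in>S. f z * pmf (N x) z) = measure_pmf.expectation (N x) f"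
      by (rule integral_measure_pmf_real[OF S, symmetric]) (use x in \<open>auto simp: S_def\<close>)
  qed
  also have "\<dots> = measure_pmf.expectation M (\<lambda>x. measure_pmf.expectation (N x) f)"
    by (rule integral_measure_pmf_real[symmetric]) (auto simp: M)
  finally show ?thesis .
qed

lemma integral_alg:
  fixes f :: "nat \<Rightarrow> real"
  assumes "valid_alg A"
  shows "measure_pmf.expectation (A h) f = f 1 * pmf (A h) 1 + f 2 * pmf (A h) 2"
proof -
  have "measure_pmf.expectation (A h) f = (\<Sum>a\<in>{1,2}. f a * pmf (A h) a)"
    by (rule integral_measure_pmf_real) (use assms in \<open>auto simp: valid_alg_def\<close>)
  then show ?thesis by simp
qed

lemma alg_sum:
  assumes "valid_alg A"
  shows "pmf (A h) 1 + pmf (A h) 2 = 1"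
  using sum_pmf_eq_1[of "{1,2::nat}" "A h"] assms by (auto simp: valid_alg_def)

lemma exp_run_Suc:
  fixes G :: "bool \<times> hist \<Rightarrow> real"
  assumes A: "valid_alg A" and e: "0 < eps" "eps < 1/2"
  shows "measure_pmf.expectation (run eps A (Suc n)) G =
    measure_pmf.expectation (run eps A n) (\<lambda>x.
      (\<Sum>a\<in>{1,2}. pmf (A (snd x)) a *
         (G (fst x, snd x @ [(a,True)]) * mu eps (fst x) a +
          G (fst x, snd x @ [(a,False)]) * (1 - mu eps (fst x) a))))"
proof -
  have mb: "0 \<le> mu eps th a" "mu eps th a \<le> 1" for th a
    using mu_bounds[OF e, of th a] by auto
  have "measure_pmf.expectation (run eps A (Suc n)) G =
     measure_pmf.expectation (run eps A n) (\<lambda>x. measure_pmf.expectation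
       ((case x of (theta, h) \<Rightarrow> bind_pmf (A h) (\<lambda>a.
         map_pmf (\<lambda>r. (theta, h @ [(a, r)])) (bernoulli_pmf (mu eps theta a))))) G)"
    unfolding run.simps
    by (rule integral_bind_pmf_fin) (auto simp: finite_run[OF A] finite_alg[OF A] split: prod.splits)
  also have "\<dots> = measure_pmf.expectation (run eps A n) (\<lambda>x.
      (\<Sum>a\<in>{1,2}. pmf (A (snd x)) a *
         (G (fst x, snd x @ [(a,True)]) * mu eps (fst x) a +
          G (fst x, snd x @ [(a,False)]) * (1 - mu eps (fst x) a))))"
  proof (intro Bochner_Integration.integral_cong refl)
    fix x :: "bool \<times> hist"
    obtain th h where x: "x = (th, h)" by (cases x)
    have "measure_pmf.expectation (bind_pmf (A h) (\<lambda>a.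
         map_pmf (\<lambda>r. (th, h @ [(a, r)])) (bernoulli_pmf (mu eps th a)))) G
      = measure_pmf.expectation (A h) (\<lambda>a. measure_pmf.expectation
         (map_pmf (\<lambda>r. (th, h @ [(a, r)])) (bernoulli_pmf (mu eps th a))) G)"
      by (rule integral_bind_pmf_fin) (auto simp: finite_alg[OF A])
    also have "\<dots> = (\<Sum>a\<in>{1,2}. pmf (A h) a *
         (G (th, h @ [(a,True)]) * mu eps th a +
          G (th, h @ [(a,False)]) * (1 - mu eps th a)))"
      by (simp add: integral_alg[OF A] mb mult.commute)
    finally show "measure_pmf.expectation (case x of (theta, h) \<Rightarrow> bind_pmf (A h) (\<lambda>a.
         map_pmf (\<lambda>r. (theta, h @ [(a, r)])) (bernoulli_pmf (mu eps theta a)))) G =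
      (\<Sum>a\<in>{1,2}. pmf (A (snd x)) a *
         (G (fst x, snd x @ [(a,True)]) * mu eps (fst x) a +
          G (fst x, snd x @ [(a,False)]) * (1 - mu eps (fst x) a)))"
      by (simp add: x)
  qed
  finally show ?thesis .
qed

lemma exp_run_0:
  fixes G :: "bool \<times> hist \<Rightarrow> real"
  shows "measure_pmf.expectation (run eps A 0) G = (G (True, []) + G (False, [])) / 2"
  by (simp add: prior_def)

lemma exp_rec:
  fixes F :: "bool \<Rightarrow> nat \<Rightarrow> real"
  assumes A: "valid_alg A"
  shows "measure_pmf.expectation (rec_dist eps A t)
           (\<lambda>x. indicator {x. snd (snd x) = i} x * F (fst x) (snd (snd x))) =
         measure_pmf.expectation (run eps A (t - 1)) (\<lambda>x. pmf (A (snd x)) i * F (fst x) i)"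
proof -
  have "measure_pmf.expectation (rec_dist eps A t)
           (\<lambda>x. indicator {x. snd (snd x) = i} x * F (fst x) (snd (snd x))) =
     measure_pmf.expectation (run eps A (t - 1)) (\<lambda>x. measure_pmf.expectation
       ((case x of (theta, h) \<Rightarrow> map_pmf (\<lambda>a. (theta, h, a)) (A h)))
       (\<lambda>x. indicator {x. snd (snd x) = i} x * F (fst x) (snd (snd x))))"
    unfolding rec_dist_def
    by (rule integral_bind_pmf_fin) (auto simp: finite_run[OF A] finite_alg[OF A] split: prod.splits)
  also have "\<dots> = measure_pmf.expectation (run eps A (t - 1)) (\<lambda>x. pmf (A (snd x)) i * F (fst x) i)"
  proof (intro Bochner_Integration.integral_cong refl)
    fix x :: "bool \<times> hist"
    obtain th h where x: "x = (th, h)" by (cases x)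
    have "measure_pmf.expectation (A h) (\<lambda>a. indicator {a. a = i} a * F th a) = 
       (\<Sum>a\<in>{i}. (indicator {a. a = i} a * F th a) * pmf (A h) a)"
      by (rule integral_measure_pmf_real) (auto simp: indicator_def)
    then show "measure_pmf.expectation (case x of (theta, h) \<Rightarrow> map_pmf (\<lambda>a. (theta, h, a)) (A h))
       (\<lambda>x. indicator {x. snd (snd x) = i} x * F (fst x) (snd (snd x))) =
       pmf (A (snd x)) i * F (fst x) i"
      by (simp add: x indicator_def)
  qed
  finally show ?thesis .
qed

lemma exp_cond:
  fixes f :: "'a \<Rightarrow> real"
  assumes P: "measure_pmf.prob M S > 0" and fin: "finite (set_pmf M)"
  shows "measure_pmf.expectation (cond_pmf M S) f =
         measure_pmf.expectation M (\<lambda>x. indicator S x * f x) / measure_pmf.prob M S"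
proof -
  have ne: "set_pmf M \<inter> S \<noteq> {}" using P measure_pmf_zero_iff[of M S] by auto
  have "measure_pmf.expectation (cond_pmf M S) f = (\<Sum>x\<in>set_pmf M. f x * pmf (cond_pmf M S) x)"
    by (rule integral_measure_pmf_real) (use ne fin in auto)
  also have "\<dots> = (\<Sum>x\<in>set_pmf M. indicator S x * f x * pmf M x) / measure_pmf.prob M S"
    by (auto simp: pmf_cond[OF ne] sum_divide_distrib indicator_def intro!: sum.cong)
  also have "(\<Sum>x\<in>set_pmf M. indicator S x * f x * pmf M x) = measure_pmf.expectation M (\<lambda>x. indicator S x * f x)"
    by (rule integral_measure_pmf_real[symmetric]) (use fin in auto)
  finally show ?thesis .
qed


lemma marginal_run: "map_pmf fst (run eps A n) = prior"
proof (induction n)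
  case 0 then show ?case by (simp add: map_pmf_comp)
next
  case (Suc n)
  have "map_pmf fst (run eps A (Suc n)) = bind_pmf (run eps A n) (\<lambda>x. return_pmf (fst x))"
    by (auto simp: map_bind_pmf map_pmf_comp split_beta intro!: bind_pmf_cong)
  also have "\<dots> = map_pmf fst (run eps A n)" by (simp add: map_pmf_def)
  finally show ?case using Suc by simp
qed

lemma sum_UNIV_Hs:
  fixes g :: "bool \<times> hist \<Rightarrow> real"
  shows "(\<Sum>x\<in>UNIV \<times> H. g x) = (\<Sum>h\<in>H. g (True, h) + g (False, h))"
proof -
  have "(\<Sum>x\<in>UNIV \<times> H. g x) = (\<Sum>th\<in>UNIV. \<Sum>h\<in>H. g (th, h))"
    by (simp add: sum.cartesian_product)
  also have "\<dots> = (\<Sum>h\<in>H. g (True, h) + g (False, h))"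
    by (simp add: UNIV_bool sum.distrib)
  finally show ?thesis .
qed

lemma exp_run_sum:
  fixes G :: "bool \<times> hist \<Rightarrow> real"
  assumes A: "valid_alg A"
  shows "measure_pmf.expectation (run eps A n) G =
    (\<Sum>h\<in>Hs n. G (True, h) * pmf (run eps A n) (True, h) + G (False, h) * pmf (run eps A n) (False, h))"
proof -
  have "measure_pmf.expectation (run eps A n) G = (\<Sum>x\<in>UNIV \<times> Hs n. G x * pmf (run eps A n) x)"
    by (rule integral_measure_pmf_real) (use supp_run[OF A, of eps n] finite_Hs in auto)
  then show ?thesis by (simp add: sum_UNIV_Hs)
qed

lemma half_mass:
  assumes A: "valid_alg A"
  shows "(\<Sum>h\<in>Hs n. pmf (run eps A n) (th, h)) = 1/2"
proof -
  let ?R = "run eps A n"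
  have "measure_pmf.prob ?R {y. fst y = th} = measure_pmf.prob (map_pmf fst ?R) {th}"
    by (simp add: measure_map_pmf vimage_def)
  also have "\<dots> = 1/2" by (simp add: marginal_run measure_pmf_single prior_def)
  finally have 1: "measure_pmf.prob ?R {y. fst y = th} = 1/2" .
  have "measure_pmf.prob ?R {y. fst y = th} = measure_pmf.prob ?R ({y. fst y = th} \<inter> set_pmf ?R)"
    by (simp add: measure_Int_set_pmf)
  also have "{y. fst y = th} \<inter> set_pmf ?R = ({th} \<times> Hs n) \<inter> set_pmf ?R"
    using supp_run[OF A, of eps n] by auto
  also have "measure_pmf.prob ?R \<dots> = measure_pmf.prob ?R ({th} \<times> Hs n)"
    by (simp add: measure_Int_set_pmf)
  also have "\<dots> = (\<Sum>x\<in>{th} \<times> Hs n. pmf ?R x)"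
    by (rule measure_measure_pmf_finite) (simp add: finite_Hs)
  also have "{th} \<times> Hs n = (\<lambda>h. (th, h)) ` Hs n" by auto
  also have "(\<Sum>x\<in>(\<lambda>h. (th, h)) ` Hs n. pmf ?R x) = (\<Sum>h\<in>Hs n. pmf ?R (th, h))"
    by (subst sum.reindex) (auto simp: inj_on_def)
  finally show ?thesis using 1 by simp
qed

lemma total_mass:
  assumes A: "valid_alg A"
  shows "(\<Sum>h\<in>Hs n. pmf (run eps A n) (False, h) + pmf (run eps A n) (True, h)) = 1"
  using half_mass[OF A, where th=False and n=n and eps=eps] half_mass[OF A, where th=True and n=n and eps=eps] by (simp add: sum.distrib)

lemma pmf_bind_single:
  assumes "\<And>y. y \<in> set_pmf M \<Longrightarrow> x \<in> set_pmf (N y) \<Longrightarrow> y = yz"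
  shows "pmf (bind_pmf M N) x = pmf M yz * pmf (N yz) x"
proof -
  have "pmf (bind_pmf M N) x = (\<Sum>y\<in>{yz}. pmf (N y) x * pmf M y)"
    unfolding pmf_bind
    by (rule integral_measure_pmf_real) (use assms in \<open>auto simp: set_pmf_iff\<close>)
  then show ?thesis by simp
qed

lemma pmf_run_Suc:
  "pmf (run eps A (Suc n)) (th, h @ [(a, r)]) =
   pmf (run eps A n) (th, h) * pmf (A h) a * pmf (bernoulli_pmf (mu eps th a)) r"
proof -
  have "pmf (run eps A (Suc n)) (th, h @ [(a, r)]) = pmf (run eps A n) (th, h) *
     pmf (bind_pmf (A h) (\<lambda>a. map_pmf (\<lambda>r. (th, h @ [(a, r)])) (bernoulli_pmf (mu eps th a))))
       (th, h @ [(a, r)])"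
    unfolding run.simps by (subst pmf_bind_single[where yz="(th,h)"]) auto
  also have "pmf (bind_pmf (A h) (\<lambda>a. map_pmf (\<lambda>r. (th, h @ [(a, r)])) (bernoulli_pmf (mu eps th a))))
       (th, h @ [(a, r)]) = pmf (A h) a * pmf (map_pmf (\<lambda>r. (th, h @ [(a, r)])) (bernoulli_pmf (mu eps th a)))
       (th, h @ [(a, r)])"
    by (subst pmf_bind_single[where yz=a]) auto
  also have "pmf (map_pmf (\<lambda>r. (th, h @ [(a, r)])) (bernoulli_pmf (mu eps th a))) (th, h @ [(a, r)])
     = pmf (bernoulli_pmf (mu eps th a)) r"
    by (rule pmf_map_inj') (auto simp: inj_def)
  finally show ?thesis by (simp add: mult.assoc)
qed


definition TT :: "real \<Rightarrow> real \<Rightarrow> real" where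
  "TT x y = (x - y)^2 / (x + y)"

lemma TT_scale: "TT (x * c) (y * c) = c * TT x y"
proof (cases "c = 0")
  case True then show ?thesis by (simp add: TT_def)
next
  case False
  have "(x * c - y * c)^2 = c * (c * (x - y)^2)" by (simp add: power2_eq_square algebra_simps)
  moreover have "x * c + y * c = c * (x + y)" by (simp add: algebra_simps)
  ultimately show ?thesis using False by (simp add: TT_def)
qed

lemma TT_nonneg: "0 \<le> x \<Longrightarrow> 0 \<le> y \<Longrightarrow> 0 \<le> TT x y"
  by (simp add: TT_def)

lemma core_ineq:
  assumes x: "0 \<le> x" and y: "0 \<le> y" and e: "0 \<le> e" "e < 1/2"
  shows "TT (x * (1/2 - e)) (y * (1/2 + e)) + TT (x * (1/2 + e)) (y * (1/2 - e))
         \<le> TT x y + 4 * e^2 * (x + y)"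
proof (cases "x + y = 0")
  case True
  then have "x = 0" "y = 0" using x y by auto
  then show ?thesis by (simp add: TT_def)
next
  case False
  define u where "u = x + y"
  define d where "d = x - y"
  define Y1 where "Y1 = x * (1/2 - e) + y * (1/2 + e)"
  define Y2 where "Y2 = x * (1/2 + e) + y * (1/2 - e)"
  define X1 where "X1 = x * (1/2 - e) - y * (1/2 + e)"
  define X2 where "X2 = x * (1/2 + e) - y * (1/2 - e)"
  have u: "u > 0" using False x y by (simp add: u_def)
  have Y1: "Y1 > 0"
  proof -
    have "Y1 = u/2 - e * d" by (simp add: Y1_def u_def d_def algebra_simps)
    moreover have "e * d \<le> e * u" using e x y by (intro mult_left_mono) (auto simp: d_def u_def)
    moreover have "e * u < 1/2 * u" using e u by (intro mult_strict_right_mono) auto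
    ultimately show ?thesis by linarith
  qed
  have Y2: "Y2 > 0"
  proof -
    have "Y2 = u/2 + e * d" by (simp add: Y2_def u_def d_def algebra_simps)
    moreover have "- e * d \<le> e * u" using e x y by (simp add: d_def u_def algebra_simps mult_left_mono)
    moreover have "e * u < 1/2 * u" using e u by (intro mult_strict_right_mono) auto
    ultimately show ?thesis by linarith
  qed
  have idt: "(d^2 + 4 * e^2 * u^2) * Y1 * Y2 - u * (X1^2 * Y2 + X2^2 * Y1)
      = e^2 * d^2 * (4 * x * y + u^2 * (1 - 4 * e^2))"
    unfolding u_def d_def Y1_def Y2_def X1_def X2_def
    by algebra
  have "1 - 4 * e^2 > 0"
  proof -
    have "e * e \<le> e * (1/2)" using e by (intro mult_left_mono) auto
    then show ?thesis using e by (simp add: power2_eq_square)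
  qed
  then have "0 \<le> e^2 * d^2 * (4 * x * y + u^2 * (1 - 4 * e^2))"
    using x y by (intro mult_nonneg_nonneg add_nonneg_nonneg) auto
  then have key: "u * (X1^2 * Y2 + X2^2 * Y1) \<le> (d^2 + 4 * e^2 * u^2) * Y1 * Y2"
    using idt by linarith
  have "TT (x * (1/2 - e)) (y * (1/2 + e)) + TT (x * (1/2 + e)) (y * (1/2 - e))
      = X1^2 / Y1 + X2^2 / Y2"
    by (simp add: TT_def X1_def X2_def Y1_def Y2_def)
  also have "\<dots> = (u * (X1^2 * Y2 + X2^2 * Y1)) / (u * Y1 * Y2)"
    using u Y1 Y2 by (simp add: field_simps)
  also have "\<dots> \<le> ((d^2 + 4 * e^2 * u^2) * Y1 * Y2) / (u * Y1 * Y2)"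
    using key u Y1 Y2 by (intro divide_right_mono) auto
  also have "\<dots> = d^2 / u + 4 * e^2 * u"
    using u Y1 Y2 by (simp add: field_simps power2_eq_square)
  also have "\<dots> = TT x y + 4 * e^2 * (x + y)"
    by (simp add: TT_def u_def d_def)
  finally show ?thesis .
qed

lemma step_ineq:
  assumes x: "0 \<le> x" and y: "0 \<le> y" and e: "0 \<le> e" "e < 1/2"
    and p: "0 \<le> p1" "0 \<le> p2" "p1 + p2 = 1" and m: "0 \<le> m" "m \<le> 1"
  shows "TT (x * p1 * (1/2 - e)) (y * p1 * (1/2 + e)) + TT (x * p1 * (1/2 + e)) (y * p1 * (1/2 - e))
    + TT (x * p2 * m) (y * p2 * m) + TT (x * p2 * (1 - m)) (y * p2 * (1 - m))
    \<le> TT x y + 4 * e^2 * (x + y)"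
proof -
  have a: "TT (x * p1 * (1/2 - e)) (y * p1 * (1/2 + e)) + TT (x * p1 * (1/2 + e)) (y * p1 * (1/2 - e))
     = p1 * (TT (x * (1/2 - e)) (y * (1/2 + e)) + TT (x * (1/2 + e)) (y * (1/2 - e)))"
    using TT_scale[of "x * (1/2 - e)" p1 "y * (1/2 + e)"] TT_scale[of "x * (1/2 + e)" p1 "y * (1/2 - e)"]
    by (simp add: algebra_simps)
  have b: "TT (x * p2 * m) (y * p2 * m) + TT (x * p2 * (1 - m)) (y * p2 * (1 - m)) = p2 * TT x y"
    using TT_scale[of x "p2 * m" y] TT_scale[of x "p2 * (1 - m)" y]
    by (simp add: algebra_simps)
  have c: "p1 * (TT (x * (1/2 - e)) (y * (1/2 + e)) + TT (x * (1/2 + e)) (y * (1/2 - e)))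
       \<le> p1 * (TT x y + 4 * e^2 * (x + y))"
    using core_ineq[OF x y e] p by (intro mult_left_mono) auto
  have "p1 * (4 * e^2 * (x + y)) \<le> 1 * (4 * e^2 * (x + y))"
    using p x y by (intro mult_right_mono) auto
  moreover have "p1 * TT x y + p2 * TT x y = TT x y" using p(3) by (metis distrib_right mult_1)
  ultimately show ?thesis using a b c by (simp only: distrib_left)
qed


lemma mu_vals:
  "mu eps True 1 = 1/2 + eps" "mu eps False 1 = 1/2 - eps" "mu eps th 2 = 1/2 - eps^2/10"
  by (auto simp: mu_def)

lemma mu_vals_Suc:
  "mu eps True (Suc 0) = 1/2 + eps" "mu eps False (Suc 0) = 1/2 - eps"
  by (auto simp: mu_def)

definition Psi :: "real \<Rightarrow> alg \<Rightarrow> nat \<Rightarrow> real" where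
  "Psi eps A n = (\<Sum>h\<in>Hs n. TT (pmf (run eps A n) (False, h)) (pmf (run eps A n) (True, h)))"

lemma pmf_run_0: "pmf (run eps A 0) (th, []) = 1/2"
proof -
  have "pmf (map_pmf (\<lambda>theta. (theta, [])) prior) ((\<lambda>theta. (theta, [] :: hist)) th) = pmf prior th"
    by (rule pmf_map_inj') (auto simp: inj_def)
  then show ?thesis by (simp add: prior_def)
qed

lemma Psi_bound:
  assumes A: "valid_alg A" and e: "0 < eps" "eps < 1/2"
  shows "Psi eps A n \<le> 4 * eps^2 * n"
proof (induction n)
  case 0
  show ?case by (simp add: Psi_def Hs_0 pmf_run_0 TT_def del: run.simps)
next
  case (Suc n)
  let ?R = "run eps A n"
  let ?R' = "run eps A (Suc n)"
  define m where "m = 1/2 - eps^2/10"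
  have mb: "0 \<le> mu eps th a" "mu eps th a \<le> 1" for th a
    using mu_bounds[OF e, of th a] by auto
  have m01: "0 \<le> m" "m \<le> 1" using mb[of True 2] by (auto simp: m_def mu_vals)
  have "Psi eps A (Suc n) = (\<Sum>x\<in>Hs n \<times> {1,2} \<times> UNIV.
      TT (pmf ?R' (False, (\<lambda>(h,a,r). h @ [(a,r)]) x)) (pmf ?R' (True, (\<lambda>(h,a,r). h @ [(a,r)]) x)))"
    unfolding Psi_def Hs_Suc
    by (subst sum.reindex) (auto intro: inj_on_subset[OF inj_snoc])
  also have "\<dots> = (\<Sum>h\<in>Hs n. \<Sum>ar\<in>{1,2} \<times> UNIV.
      TT (pmf ?R' (False, h @ [ar])) (pmf ?R' (True, h @ [ar])))"
    by (simp add: sum.cartesian_product' split_beta)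
  also have "\<dots> \<le> (\<Sum>h\<in>Hs n. TT (pmf ?R (False, h)) (pmf ?R (True, h))
                   + 4 * eps^2 * (pmf ?R (False, h) + pmf ?R (True, h)))"
  proof (rule sum_mono)
    fix h
    define x where "x = pmf ?R (False, h)"
    define y where "y = pmf ?R (True, h)"
    define p1 where "p1 = pmf (A h) 1"
    define p2 where "p2 = pmf (A h) 2"
    have "(\<Sum>ar\<in>{1,2} \<times> UNIV. TT (pmf ?R' (False, h @ [ar])) (pmf ?R' (True, h @ [ar])))
      = (\<Sum>a\<in>{1,2}. \<Sum>r\<in>UNIV. TT (pmf ?R' (False, h @ [(a,r)])) (pmf ?R' (True, h @ [(a,r)])))"
      by (simp add: sum.cartesian_product' split_beta)
    also have "\<dots> = TT (x * p1 * (1/2 - eps)) (y * p1 * (1/2 + eps)) + TT (x * p1 * (1 - (1/2 - eps))) (y * p1 * (1 - (1/2 + eps)))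
    + TT (x * p2 * m) (y * p2 * m) + TT (x * p2 * (1 - m)) (y * p2 * (1 - m))"
      using mb[of True 1] mb[of False 1] mb[of True 2] mb[of False 2]
      by (simp add: pmf_run_Suc UNIV_bool mu_vals mu_vals_Suc x_def y_def p1_def p2_def m_def add.assoc del: run.simps)
    also have "\<dots> \<le> TT x y + 4 * eps^2 * (x + y)"
      using step_ineq[of x y eps p1 p2 m] e m01 alg_sum[OF A, of h]
      by (simp add: x_def y_def p1_def p2_def)
    finally show "(\<Sum>ar\<in>{1,2} \<times> UNIV. TT (pmf ?R' (False, h @ [ar])) (pmf ?R' (True, h @ [ar])))
       \<le> TT (pmf ?R (False, h)) (pmf ?R (True, h)) + 4 * eps^2 * (pmf ?R (False, h) + pmf ?R (True, h))"
      by (simp add: x_def y_def)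
  qed
  also have "\<dots> = Psi eps A n + 4 * eps^2 * (\<Sum>h\<in>Hs n. pmf ?R (False, h) + pmf ?R (True, h))"
    by (simp add: Psi_def sum.distrib sum_distrib_left[symmetric] del: sum.distrib[symmetric])
  also have "\<dots> = Psi eps A n + 4 * eps^2" by (simp add: total_mass[OF A])
  also have "\<dots> \<le> 4 * eps^2 * Suc n" using Suc by (simp add: algebra_simps)
  finally show ?case .
qed


lemma best_arm_vals:
  assumes e: "0 < eps" "eps < 1/2"
  shows "best_arm eps True = 1" "best_arm eps False = 2"
proof -
  have e1: "eps * eps \<le> eps * (1/2)" using e by (intro mult_left_mono) auto
  have e2: "eps^2 = eps * eps" by (simp add: power2_eq_square)
  have lt: "eps^2/10 < eps" using e1 e2 e by linarith
  have ge: "eps^2 \<ge> 0" by simp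
  have f1: "1/2 - eps^2/10 \<le> 1/2 + eps" "1/2 - eps \<le> 1/2 - eps^2/10" "\<not> (1/2 - eps^2/10 \<le> 1/2 - eps)"
    using lt ge e by linarith+
  show "best_arm eps True = 1"
    unfolding best_arm_def
    by (rule Least_equality) (use f1 in \<open>auto simp: mu_def\<close>)
  show "best_arm eps False = 2"
    unfolding best_arm_def
    by (rule Least_equality) (use f1 in \<open>auto simp: mu_def\<close>)
qed

lemma cond_measure:
  assumes ne: "set_pmf p \<inter> s \<noteq> {}"
  shows "measure_pmf.prob (cond_pmf p s) B = measure_pmf.prob p (s \<inter> B) / measure_pmf.prob p s"
  by (simp add: cond_pmf.rep_eq[OF ne] emeasure_measure_pmf_not_zero[OF ne] measure_pmf.emeasure_finite)

lemma thompson_K1: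
  assumes A: "valid_alg A" and e: "0 < eps" "eps < 1/2" and T: "thompson_at eps A t"
  shows "(pmf (run eps A (t - 1)) (False, h) + pmf (run eps A (t - 1)) (True, h)) * pmf (A h) 2
         = pmf (run eps A (t - 1)) (False, h)"
proof -
  let ?R = "run eps A (t - 1)"
  show ?thesis
  proof (cases "pmf ?R (False, h) + pmf ?R (True, h) = 0")
    case True
    then have "pmf ?R (False, h) = 0" using pmf_nonneg[of ?R "(False,h)"] pmf_nonneg[of ?R "(True,h)"]
      by linarith
    then show ?thesis using True by simp
  next
    case False
    then obtain th where th: "pmf ?R (th, h) \<noteq> 0" by fastforce
    then have mem: "(th, h) \<in> set_pmf ?R" by (simp add: set_pmf_iff)
    have q: "pmf (A h) 2 = measure_pmf.prob (cond_pmf ?R {y. snd y = h}) {y. best_arm eps (fst y) = 2}"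
      using T mem unfolding thompson_at_def by fastforce
    have ne: "set_pmf ?R \<inter> {y. snd y = h} \<noteq> {}" using mem by auto
    have s1: "{y. snd y = h} \<inter> {y. best_arm eps (fst y) = 2} = {(False, h)}"
      using best_arm_vals[OF e] by auto
    have s2: "{y. snd y = h} = {(True, h), (False, h)}" by auto
    have "pmf (A h) 2 = pmf ?R (False, h) / (pmf ?R (True, h) + pmf ?R (False, h))"
      unfolding q cond_measure[OF ne] s1 
      by (subst s2, subst measure_measure_pmf_finite) (auto simp: measure_pmf_single)
    then show ?thesis using False by (simp add: field_simps)
  qed
qed

lemma partii:
  assumes e: "0 < eps" "eps < 1/2" and A: "valid_alg A" and B: "BIC eps A" and t: "t \<ge> 1"
    and T: "thompson_at eps A t"
  shows "1/40 / eps \<le> real t"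
proof -
  define n where "n = t - 1"
  let ?R = "run eps A n"
  define wF where "wF h = pmf ?R (False, h)" for h
  define wT where "wT h = pmf ?R (True, h)" for h
  define q where "q h = pmf (A h) 2" for h
  have K1: "(wF h + wT h) * q h = wF h" for h
    using thompson_K1[OF A e T, of h] by (simp add: wF_def wT_def q_def n_def)
  have K1': "q h * pmf ?R (True, h) + q h * pmf ?R (False, h) = pmf ?R (False, h)" for h
    using K1[of h] by (simp add: algebra_simps wF_def wT_def)
  have wnn: "0 \<le> wF h" "0 \<le> wT h" for h by (auto simp: wF_def wT_def)
  let ?S = "{x :: bool \<times> hist \<times> nat. snd (snd x) = 2}"
  have finrec: "finite (set_pmf (rec_dist eps A t))"
    unfolding rec_dist_def using finite_run[OF A] finite_alg[OF A]
    by (auto intro!: finite_UN_I split: prod.splits)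
  have "measure_pmf.prob (rec_dist eps A t) ?S =
      measure_pmf.expectation (rec_dist eps A t) (\<lambda>x. indicator ?S x * (\<lambda>th a. 1::real) (fst x) (snd (snd x)))"
    by simp
  also have "\<dots> = measure_pmf.expectation ?R (\<lambda>x. pmf (A (snd x)) 2 * 1)"
    unfolding n_def by (rule exp_rec[OF A])
  also have "\<dots> = (\<Sum>h\<in>Hs n. wF h)"
    by (simp add: exp_run_sum[OF A] wF_def q_def[symmetric] K1')
  also have "\<dots> = 1/2" unfolding wF_def by (rule half_mass[OF A])
  finally have P: "measure_pmf.prob (rec_dist eps A t) ?S = 1/2" .
  have "measure_pmf.expectation (cond_pmf (rec_dist eps A t) ?S)
          (\<lambda>x. mu eps (fst x) 2 - mu eps (fst x) 1) \<ge> 0"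
    using B t P unfolding BIC_def by auto
  then have "0 \<le> measure_pmf.expectation (rec_dist eps A t)
          (\<lambda>x. indicator ?S x * (\<lambda>th a. mu eps th 2 - mu eps th 1) (fst x) (snd (snd x))) / (1/2)"
    by (simp add: exp_cond[OF _ finrec] P)
  then have "0 \<le> measure_pmf.expectation (rec_dist eps A t)
          (\<lambda>x. indicator ?S x * (\<lambda>th a. mu eps th 2 - mu eps th 1) (fst x) (snd (snd x)))"
    by simp
  also have "\<dots> = measure_pmf.expectation ?R (\<lambda>x. pmf (A (snd x)) 2 * (mu eps (fst x) 2 - mu eps (fst x) 1))"
    unfolding n_def by (rule exp_rec[OF A])
  also have "\<dots> = (\<Sum>h\<in>Hs n. q h * ((- (eps^2/10) - eps) * wT h + (- (eps^2/10) + eps) * wF h))"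
    by (simp add: exp_run_sum[OF A] wF_def wT_def q_def mu_vals mu_vals_Suc algebra_simps)
  also have "\<dots> = (\<Sum>h\<in>Hs n. eps/2 * TT (wF h) (wT h) + eps/2 * wF h - eps/2 * wT h - eps^2/10 * wF h)"
  proof (rule sum.cong[OF refl])
    fix h
    show "q h * ((- (eps^2/10) - eps) * wT h + (- (eps^2/10) + eps) * wF h) =
          eps/2 * TT (wF h) (wT h) + eps/2 * wF h - eps/2 * wT h - eps^2/10 * wF h"
    proof (cases "wF h + wT h = 0")
      case True
      then have "wF h = 0" "wT h = 0" using wnn[of h] by linarith+
      then show ?thesis by (simp add: TT_def)
    next
      case False
      then have qh: "q h = wF h / (wF h + wT h)" using K1[of h] by (simp add: field_simps)
      show ?thesis using False unfolding qh TT_def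
        by (simp add: field_simps power2_eq_square)
    qed
  qed
  also have "\<dots> = eps/2 * Psi eps A n + eps/2 * (\<Sum>h\<in>Hs n. wF h) - eps/2 * (\<Sum>h\<in>Hs n. wT h)
                   - eps^2/10 * (\<Sum>h\<in>Hs n. wF h)"
    by (simp add: Psi_def wF_def wT_def sum.distrib sum_subtractf sum_distrib_left)
  also have "\<dots> = eps/2 * Psi eps A n - eps^2/20"
  proof -
    have hF: "(\<Sum>h\<in>Hs n. wF h) = 1/2" unfolding wF_def by (rule half_mass[OF A])
    have hT: "(\<Sum>h\<in>Hs n. wT h) = 1/2" unfolding wT_def by (rule half_mass[OF A])
    show ?thesis by (simp only: hF hT)
  qed
  finally have "eps^2/20 \<le> eps/2 * Psi eps A n" by simp
  moreover have "Psi eps A n \<le> 4 * eps^2 * n" by (rule Psi_bound[OF A e])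
  moreover have "eps/2 * Psi eps A n \<le> eps/2 * (4 * eps^2 * n)"
    using calculation(2) e by (intro mult_left_mono) auto
  ultimately have "eps^2/20 \<le> eps/2 * (4 * eps^2 * n)" by linarith
  then have "eps^2 * 1 \<le> eps^2 * (40 * eps * n)" by (simp add: algebra_simps power2_eq_square)
  then have "1 \<le> 40 * eps * n" using e by (simp add: mult_le_cancel_left)
  then have "1/40 / eps \<le> n" using e by (simp add: field_simps)
  also have "\<dots> \<le> real t" by (simp add: n_def)
  finally show ?thesis .
qed


fun alg0 :: alg where
  "alg0 [] = return_pmf 1"
| "alg0 [(a, r)] = (if r then pmf_of_set {1,2} else return_pmf 2)"
| "alg0 [(a1, r1), (a2, r2)] = (if a2 = 2 \<and> r1 then return_pmf 1 else return_pmf 2)"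
| "alg0 (x # y # z # w) = return_pmf 1"

lemma valid_alg0: "valid_alg alg0"
  unfolding valid_alg_def
proof
  fix h show "set_pmf (alg0 h) \<subseteq> {1,2}"
    by (induction h rule: alg0.induct) auto
qed

lemma cover0:
  assumes e: "0 < eps" "eps < 1/2"
  shows "\<forall>x\<in>set_pmf (run eps alg0 3). {1,2} \<subseteq> fst ` set (snd x)"
proof -
  have mb: "0 < mu eps th a" "mu eps th a < 1" for th a using mu_bounds[OF e] by auto
  show ?thesis
    by (auto simp: numeral_3_eq_3 mb)
qed

lemma t1: assumes e: "0 < eps" "eps < 1/2" and ij: "i \<in> {1,2}" "j \<in> {1,2}"
  shows "0 \<le> measure_pmf.expectation (run eps alg0 0)
     (\<lambda>x. pmf (alg0 (snd x)) i * (mu eps (fst x) i - mu eps (fst x) j))"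
  using ij e by (auto simp add: exp_run_0 prior_def mu_def field_simps power2_eq_square del: run.simps)

lemma t2: assumes e: "0 < eps" "eps < 1/2" and ij: "i \<in> {1,2}" "j \<in> {1,2}"
  shows "0 \<le> measure_pmf.expectation (run eps alg0 (Suc 0))
     (\<lambda>x. pmf (alg0 (snd x)) i * (mu eps (fst x) i - mu eps (fst x) j))"
proof -
  have mb: "0 \<le> mu eps th a" "mu eps th a \<le> 1" for th a using mu_bounds[OF e, of th a] by auto
  show ?thesis
  using ij apply (simp add: exp_run_0 exp_run_Suc[OF valid_alg0 e] mb del: run.simps)
  apply (elim disjE)
  apply (simp_all add: mu_def field_simps power2_eq_square)
  done
qed

lemma t3: assumes e: "0 < eps" "eps < 1/2" and ij: "i \<in> {1,2}" "j \<in> {1,2}"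
  shows "0 \<le> measure_pmf.expectation (run eps alg0 (Suc (Suc 0)))
     (\<lambda>x. pmf (alg0 (snd x)) i * (mu eps (fst x) i - mu eps (fst x) j))"
proof -
  have mb: "0 \<le> mu eps th a" "mu eps th a \<le> 1" for th a using mu_bounds[OF e, of th a] by auto
  show ?thesis
  using ij apply (simp add: exp_run_0 exp_run_Suc[OF valid_alg0 e] mb del: run.simps)
  apply (elim disjE)
  apply (simp_all add: mu_def field_simps power2_eq_square)
  done
qed


lemma t4: assumes e: "0 < eps" "eps < 1/2" and ij: "i \<in> {1,2}" "j \<in> {1,2}" and n: "n \<ge> 3"
  shows "0 \<le> measure_pmf.expectation (run eps alg0 n)
     (\<lambda>x. pmf (alg0 (snd x)) i * (mu eps (fst x) i - mu eps (fst x) j))"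
proof -
  have "measure_pmf.expectation (run eps alg0 n)
     (\<lambda>x. pmf (alg0 (snd x)) i * (mu eps (fst x) i - mu eps (fst x) j)) =
     measure_pmf.expectation (run eps alg0 n)
     (\<lambda>x. (\<lambda>th. (if i = 1 then 1 else 0) * (mu eps th i - mu eps th j)) (fst x))"
  proof (rule integral_cong_AE)
    show "AE x in measure_pmf (run eps alg0 n).
       pmf (alg0 (snd x)) i * (mu eps (fst x) i - mu eps (fst x) j) =
       (\<lambda>th. (if i = 1 then 1 else 0) * (mu eps th i - mu eps th j)) (fst x)"
      unfolding AE_measure_pmf_iff
    proof
      fix x assume "x \<in> set_pmf (run eps alg0 n)"
      then have "snd x \<in> Hs n" using supp_run[OF valid_alg0, of eps n] by auto
      then have "length (snd x) \<ge> 3" using n by (simp add: Hs_def)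
      then obtain a b c w where "snd x = a # b # c # w"
        by (metis Suc_le_length_iff numeral_3_eq_3)
      then show "pmf (alg0 (snd x)) i * (mu eps (fst x) i - mu eps (fst x) j) =
        (\<lambda>th. (if i = 1 then 1 else 0) * (mu eps th i - mu eps th j)) (fst x)"
        by simp
    qed
  qed auto
  also have "\<dots> = measure_pmf.expectation (map_pmf fst (run eps alg0 n))
     (\<lambda>th. (if i = 1 then 1 else 0) * (mu eps th i - mu eps th j))"
    by simp
  also have "\<dots> \<ge> 0"
    using ij e by (auto simp add: marginal_run prior_def mu_def field_simps power2_eq_square)
  finally show ?thesis .
qed

lemma BIC_suff:
  assumes A: "valid_alg A"
    and H: "\<And>t i j. t \<ge> 1 \<Longrightarrow> i \<in> {1,2} \<Longrightarrow> j \<in> {1,2} \<Longrightarrow> 0 \<le> measure_pmf.expectation (run eps A (t - 1))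
     (\<lambda>x. pmf (A (snd x)) i * (mu eps (fst x) i - mu eps (fst x) j))"
  shows "BIC eps A"
  unfolding BIC_def
proof (intro allI impI ballI)
  fix t :: nat and i j assume t: "1 \<le> t" and ij: "i \<in> {1::nat,2}" "j \<in> {1::nat,2}"
  let ?S = "{x :: bool \<times> hist \<times> nat. snd (snd x) = i}"
  assume P: "measure_pmf.prob (rec_dist eps A t) ?S > 0"
  have finrec: "finite (set_pmf (rec_dist eps A t))"
    unfolding rec_dist_def using finite_run[OF A] finite_alg[OF A]
    by (auto intro!: finite_UN_I split: prod.splits)
  have "measure_pmf.expectation (rec_dist eps A t)
          (\<lambda>x. indicator ?S x * (\<lambda>th a. mu eps th i - mu eps th j) (fst x) (snd (snd x)))
       = measure_pmf.expectation (run eps A (t - 1))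
     (\<lambda>x. pmf (A (snd x)) i * (mu eps (fst x) i - mu eps (fst x) j))"
    by (rule exp_rec[OF A])
  also have "\<dots> \<ge> 0" using H[OF t ij] .
  finally have "0 \<le> measure_pmf.expectation (rec_dist eps A t)
          (\<lambda>x. indicator ?S x * (\<lambda>th a. mu eps th i - mu eps th j) (fst x) (snd (snd x)))" .
  then show "0 \<le> measure_pmf.expectation (cond_pmf (rec_dist eps A t) ?S)
          (\<lambda>x. mu eps (fst x) i - mu eps (fst x) j)"
    using P by (simp add: exp_cond[OF P finrec])
qed

lemma BIC_alg0:
  assumes e: "0 < eps" "eps < 1/2"
  shows "BIC eps alg0"
proof (rule BIC_suff[OF valid_alg0])
  fix t i j assume t: "1 \<le> (t::nat)" and ij: "i \<in> {1::nat,2}" "j \<in> {1::nat,2}"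
  consider "t = 1" | "t = 2" | "t = 3" | "t \<ge> 4" using t by linarith
  then show "0 \<le> measure_pmf.expectation (run eps alg0 (t - 1))
     (\<lambda>x. pmf (alg0 (snd x)) i * (mu eps (fst x) i - mu eps (fst x) j))"
  proof cases
    case 1 then show ?thesis using t1[OF e ij] by simp
  next
    case 2 then show ?thesis using t2[OF e ij] by (simp add: numeral_2_eq_2)
  next
    case 3 then show ?thesis using t3[OF e ij] by (simp add: numeral_3_eq_3)
  next
    case 4 then show ?thesis using t4[OF e ij, of "t - 1"] by simp
  qed
qed

theorem propositionD5:
  shows "(\<exists>T::nat. \<forall>eps::real. 0 < eps \<and> eps < 1/2 \<longrightarrow>
            (\<exists>A. valid_alg A \<and> BIC eps A \<and>
                 (\<forall>x\<in>set_pmf (run eps A T). {1,2} \<subseteq> fst ` set (snd x))))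
       \<and> (\<exists>c::real. c > 0 \<and>
            (\<forall>eps::real. \<forall>A t. 0 < eps \<and> eps < 1/2 \<and> valid_alg A \<and> BIC eps A \<and>
               t \<ge> 1 \<and> thompson_at eps A t \<longrightarrow> real t \<ge> c / eps))"
proof
  show "\<exists>T::nat. \<forall>eps::real. 0 < eps \<and> eps < 1/2 \<longrightarrow>
            (\<exists>A. valid_alg A \<and> BIC eps A \<and>
                 (\<forall>x\<in>set_pmf (run eps A T). {1,2} \<subseteq> fst ` set (snd x)))"
    using valid_alg0 BIC_alg0 cover0 by blast
  show "\<exists>c::real. c > 0 \<and>
            (\<forall>eps::real. \<forall>A t. 0 < eps \<and> eps < 1/2 \<and> valid_alg A \<and> BIC eps A \<and>
               t \<ge> 1 \<and> thompson_at eps A t \<longrightarrow> real t \<ge> c / eps)"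
    using partii by (intro exI[of _ "1/40"]) auto
qed

end
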